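(* A persistent cochain complex $\mathbb{X}\in p\mathsf{Ch}^*_\mathbb{Q}$ is locally compact if and only if the persistence module $\mathbb{X}^k$ is locally compact for every $k\ge0$.
   Context: $p\mathsf{Ch}^*_\mathbb{Q}$ is the category of functors from $[0,\infty)$ to non-negatively graded rational cochain complexes; $\mathbb{X}^k$ is the persistence module of degree-$k$ cochains. A persistence module (functor $[0,\infty)\to\mathsf{Vec}_\mathbb{Q}$) is compact if it is a compact object (equivalently tame with finite-dimensional components), and is locally compact if every element lies in a compact submodule. A persistent complex is compact if it is a compact object of $p\mathsf{Ch}^*_\mathbb{Q}$ (equivalently tame and with each component a bounded, degreewise finite-dimensional complex), and $\mathbb{X}$ is locally compact if every element $x\in\mathbb{X}^k(r)$ lies in some compact subcomplex of $\mathbb{X}$. *)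

theory Defs
  imports Complex_Main
begin

text \<open>
Persistence modules over the rationals, indexed by the poset [0,\<infinity>).
All vector spaces live inside an ambient rational vector space of type 'v
(given by the scalar multiplication scale). A persistence module is a family
of subspaces V r (r \<ge> 0) together with structure maps f r s (0 \<le> r \<le> s),
which are linear on V r, land in V s, and are functorial.
\<close>

definition lin_on :: "(rat \<Rightarrow> 'v::ab_group_add \<Rightarrow> 'v) \<Rightarrow> 'v set \<Rightarrow> ('v \<Rightarrow> 'v) \<Rightarrow> bool" where
  "lin_on scale A g \<longleftrightarrow>
     (\<forall>x\<in>A. \<forall>y\<in>A. g (x + y) = g x + g y) \<and> (\<forall>c. \<forall>x\<in>A. g (scale c x) = scale c (g x))"

definition pmod :: "(rat \<Rightarrow> 'v::ab_group_add \<Rightarrow> 'v) \<Rightarrow> (real \<Rightarrow> 'v set) \<Rightarrow> (real \<Rightarrow> real \<Rightarrow> 'v \<Rightarrow> 'v) \<Rightarrow> bool" where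
  "pmod scale V f \<longleftrightarrow>
     vector_space scale \<and>
     (\<forall>r\<ge>0. module.subspace scale (V r)) \<and>
     (\<forall>r s. 0 \<le> r \<and> r \<le> s \<longrightarrow> f r s ` V r \<subseteq> V s \<and> lin_on scale (V r) (f r s)) \<and>
     (\<forall>r\<ge>0. \<forall>x\<in>V r. f r r x = x) \<and>
     (\<forall>r s t. 0 \<le> r \<and> r \<le> s \<and> s \<le> t \<longrightarrow> (\<forall>x\<in>V r. f s t (f r s x) = f r t x))"

definition fin_dim :: "(rat \<Rightarrow> 'v::ab_group_add \<Rightarrow> 'v) \<Rightarrow> 'v set \<Rightarrow> bool" where
  "fin_dim scale A \<longleftrightarrow> (\<exists>B. finite B \<and> B \<subseteq> A \<and> module.span scale B = A)"

definition tame :: "(real \<Rightarrow> 'v set) \<Rightarrow> (real \<Rightarrow> real \<Rightarrow> 'v \<Rightarrow> 'v) \<Rightarrow> bool" where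
  "tame V f \<longleftrightarrow> (\<exists>T. finite T \<and>
     (\<forall>r s. 0 \<le> r \<and> r \<le> s \<and> T \<inter> {r<..s} = {} \<longrightarrow> bij_betw (f r s) (V r) (V s)))"

definition compact_pmod :: "(rat \<Rightarrow> 'v::ab_group_add \<Rightarrow> 'v) \<Rightarrow> (real \<Rightarrow> 'v set) \<Rightarrow> (real \<Rightarrow> real \<Rightarrow> 'v \<Rightarrow> 'v) \<Rightarrow> bool" where
  "compact_pmod scale V f \<longleftrightarrow> pmod scale V f \<and> tame V f \<and> (\<forall>r\<ge>0. fin_dim scale (V r))"

definition sub_pmod :: "(rat \<Rightarrow> 'v::ab_group_add \<Rightarrow> 'v) \<Rightarrow> (real \<Rightarrow> 'v set) \<Rightarrow> (real \<Rightarrow> 'v set) \<Rightarrow> (real \<Rightarrow> real \<Rightarrow> 'v \<Rightarrow> 'v) \<Rightarrow> bool" where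
  "sub_pmod scale W V f \<longleftrightarrow>
     (\<forall>r\<ge>0. module.subspace scale (W r) \<and> W r \<subseteq> V r) \<and>
     (\<forall>r s. 0 \<le> r \<and> r \<le> s \<longrightarrow> f r s ` W r \<subseteq> W s)"

definition loc_compact_pmod :: "(rat \<Rightarrow> 'v::ab_group_add \<Rightarrow> 'v) \<Rightarrow> (real \<Rightarrow> 'v set) \<Rightarrow> (real \<Rightarrow> real \<Rightarrow> 'v \<Rightarrow> 'v) \<Rightarrow> bool" where
  "loc_compact_pmod scale V f \<longleftrightarrow>
     (\<forall>r\<ge>0. \<forall>x\<in>V r. \<exists>W. sub_pmod scale W V f \<and> compact_pmod scale W f \<and> x \<in> W r)"

text \<open>Persistent (non-negatively graded) cochain complexes: C k is the
persistence module of degree-k cochains with structure maps F k, and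
D k r : C k r \<rightarrow> C (k+1) r is the differential at index r.\<close>
definition pcomplex :: "(rat \<Rightarrow> 'v::ab_group_add \<Rightarrow> 'v) \<Rightarrow> (nat \<Rightarrow> real \<Rightarrow> 'v set) \<Rightarrow> (nat \<Rightarrow> real \<Rightarrow> real \<Rightarrow> 'v \<Rightarrow> 'v) \<Rightarrow> (nat \<Rightarrow> real \<Rightarrow> 'v \<Rightarrow> 'v) \<Rightarrow> bool" where
  "pcomplex scale C F D \<longleftrightarrow>
     (\<forall>k. pmod scale (C k) (F k)) \<and>
     (\<forall>k. \<forall>r\<ge>0. D k r ` C k r \<subseteq> C (Suc k) r \<and> lin_on scale (C k r) (D k r)) \<and>
     (\<forall>k. \<forall>r\<ge>0. \<forall>x\<in>C k r. D (Suc k) r (D k r x) = 0) \<and>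
     (\<forall>k r s. 0 \<le> r \<and> r \<le> s \<longrightarrow> (\<forall>x\<in>C k r. F (Suc k) r s (D k r x) = D k s (F k r s x)))"

definition compact_pcomplex :: "(rat \<Rightarrow> 'v::ab_group_add \<Rightarrow> 'v) \<Rightarrow> (nat \<Rightarrow> real \<Rightarrow> 'v set) \<Rightarrow> (nat \<Rightarrow> real \<Rightarrow> real \<Rightarrow> 'v \<Rightarrow> 'v) \<Rightarrow> (nat \<Rightarrow> real \<Rightarrow> 'v \<Rightarrow> 'v) \<Rightarrow> bool" where
  "compact_pcomplex scale C F D \<longleftrightarrow>
     pcomplex scale C F D \<and>
     (\<exists>T. finite T \<and> (\<forall>k r s. 0 \<le> r \<and> r \<le> s \<and> T \<inter> {r<..s} = {} \<longrightarrow> bij_betw (F k r s) (C k r) (C k s))) \<and>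
     (\<exists>N. \<forall>k\<ge>N. \<forall>r\<ge>0. C k r = {0}) \<and>
     (\<forall>k. \<forall>r\<ge>0. fin_dim scale (C k r))"

definition sub_pcomplex :: "(rat \<Rightarrow> 'v::ab_group_add \<Rightarrow> 'v) \<Rightarrow> (nat \<Rightarrow> real \<Rightarrow> 'v set) \<Rightarrow> (nat \<Rightarrow> real \<Rightarrow> 'v set) \<Rightarrow> (nat \<Rightarrow> real \<Rightarrow> real \<Rightarrow> 'v \<Rightarrow> 'v) \<Rightarrow> (nat \<Rightarrow> real \<Rightarrow> 'v \<Rightarrow> 'v) \<Rightarrow> bool" where
  "sub_pcomplex scale Y C F D \<longleftrightarrow>
     (\<forall>k. sub_pmod scale (Y k) (C k) (F k)) \<and>
     (\<forall>k. \<forall>r\<ge>0. D k r ` Y k r \<subseteq> Y (Suc k) r)"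

definition loc_compact_pcomplex :: "(rat \<Rightarrow> 'v::ab_group_add \<Rightarrow> 'v) \<Rightarrow> (nat \<Rightarrow> real \<Rightarrow> 'v set) \<Rightarrow> (nat \<Rightarrow> real \<Rightarrow> real \<Rightarrow> 'v \<Rightarrow> 'v) \<Rightarrow> (nat \<Rightarrow> real \<Rightarrow> 'v \<Rightarrow> 'v) \<Rightarrow> bool" where
  "loc_compact_pcomplex scale C F D \<longleftrightarrow>
     (\<forall>k. \<forall>r\<ge>0. \<forall>x\<in>C k r. \<exists>Y. sub_pcomplex scale Y C F D \<and> compact_pcomplex scale Y F D \<and> x \<in> Y k r)"

end

theory Submission imports Defs begin

lemma lin_on_subset: "lin_on scale A g \<Longrightarrow> B \<subseteq> A \<Longrightarrow> lin_on scale B g"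
  unfolding lin_on_def by blast

lemma sub_pmod_pmod: "pmod scale V f \<Longrightarrow> sub_pmod scale W V f \<Longrightarrow> pmod scale W f"
  unfolding pmod_def sub_pmod_def
  by (meson lin_on_subset order.trans subsetD)

lemma gap: fixes e s0 :: real
  assumes "finite T" "e < s0" shows "\<exists>s1. e < s1 \<and> s1 \<le> s0 \<and> T \<inter> {e<..s1} = {}"
proof (cases "{x\<in>T. e < x} = {}")
  case True then show ?thesis using assms by (intro exI[of _ s0]) auto
next
  case False
  define m where "m = Min {x\<in>T. e < x}"
  have fin: "finite {x\<in>T. e < x}" using assms by auto
  have "m \<in> {x\<in>T. e < x}" unfolding m_def using Min_in[OF fin False] .
  hence me: "e < m" by auto
  have ml: "\<And>x. x \<in> T \<Longrightarrow> e < x \<Longrightarrow> m \<le> x" unfolding m_def using fin by auto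
  show ?thesis
    apply (intro exI[of _ "min s0 ((e+m)/2)"])
    using assms me ml by (auto simp: min_def) (smt (verit, ccfv_SIG) field_sum_of_halves)+
qed

definition adm :: "(real \<Rightarrow> 'v set) \<Rightarrow> (real \<times> 'v) set \<Rightarrow> bool" where
  "adm V S \<longleftrightarrow> (\<forall>p\<in>S. 0 \<le> fst p \<and> snd p \<in> V (fst p))"

definition gen :: "(rat \<Rightarrow> 'v::ab_group_add \<Rightarrow> 'v) \<Rightarrow> (real \<Rightarrow> real \<Rightarrow> 'v \<Rightarrow> 'v) \<Rightarrow> (real \<times> 'v) set \<Rightarrow> real \<Rightarrow> 'v set" where
  "gen scale f S s = module.span scale ((\<lambda>(t,y). f t s y) ` {p\<in>S. fst p \<le> s})"

locale rvs = vector_space scale for scale :: "rat \<Rightarrow> 'v::ab_group_add \<Rightarrow> 'v"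
begin

lemma lin_zero: "lin_on scale A g \<Longrightarrow> 0 \<in> A \<Longrightarrow> g 0 = 0"
  unfolding lin_on_def by (metis add_0 add_cancel_right_right)

lemma lin_span:
  assumes l: "lin_on scale A g" and A: "subspace A" and X: "X \<subseteq> A" and x: "x \<in> span X"
  shows "x \<in> A \<and> g x \<in> span (g ` X)"
  using x
proof (induction rule: span_induct_alt)
  case base
  then show ?case using lin_zero[OF l] A subspace_0 span_zero by metis
next
  case (step c x y)
  have xA: "x \<in> A" using step X by auto
  have cx: "scale c x \<in> A" using A xA subspace_scale by blast
  have "g (scale c x + y) = scale c (g x) + g y"
    using l cx step xA unfolding lin_on_def by simp
  moreover have "scale c (g x) + g y \<in> span (g ` X)"
    using step by (meson image_eqI span_add span_base span_scale)
  ultimately show ?case using A cx step subspace_add by auto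
qed

lemma lin_add: "lin_on scale A g \<Longrightarrow> x \<in> A \<Longrightarrow> y \<in> A \<Longrightarrow> g (x + y) = g x + g y"
  unfolding lin_on_def by blast
lemma lin_scale: "lin_on scale A g \<Longrightarrow> x \<in> A \<Longrightarrow> g (scale c x) = scale c (g x)"
  unfolding lin_on_def by blast
lemma lin_diff: "lin_on scale A g \<Longrightarrow> subspace A \<Longrightarrow> x \<in> A \<Longrightarrow> y \<in> A \<Longrightarrow> g (x - y) = g x - g y"
  proof -
  assume a: "lin_on scale A g" "subspace A" "x \<in> A" "y \<in> A"
  have "x - y \<in> A" using a subspace_diff by blast
  hence "g (x - y + y) = g (x - y) + g y" using a lin_add by blast
  thus ?thesis by simp
qed

end

locale pmc = rvs scale for scale :: "rat \<Rightarrow> 'v::ab_group_add \<Rightarrow> 'v" +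
  fixes V :: "real \<Rightarrow> 'v set" and f :: "real \<Rightarrow> real \<Rightarrow> 'v \<Rightarrow> 'v"
  assumes pm: "pmod scale V f"
begin

lemma pmD: "\<forall>r\<ge>0. subspace (V r)"
  "\<forall>r s. 0 \<le> r \<and> r \<le> s \<longrightarrow> f r s ` V r \<subseteq> V s \<and> lin_on scale (V r) (f r s)"
  "\<forall>r s t. 0 \<le> r \<and> r \<le> s \<and> s \<le> t \<longrightarrow> (\<forall>x\<in>V r. f s t (f r s x) = f r t x)"
  using pm unfolding pmod_def by simp_all
lemma sub: "0 \<le> r \<Longrightarrow> subspace (V r)" using pmD(1) by simp
lemma fmap: "0 \<le> r \<Longrightarrow> r \<le> s \<Longrightarrow> x \<in> V r \<Longrightarrow> f r s x \<in> V s" using pmD(2) by blast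
lemma flin: "0 \<le> r \<Longrightarrow> r \<le> s \<Longrightarrow> lin_on scale (V r) (f r s)" using pmD(2) by blast
lemma fcomp: "0 \<le> r \<Longrightarrow> r \<le> s \<Longrightarrow> s \<le> t \<Longrightarrow> x \<in> V r \<Longrightarrow> f s t (f r s x) = f r t x"
  using pmD(3) by blast
lemma fzero: "0 \<le> r \<Longrightarrow> r \<le> s \<Longrightarrow> f r s 0 = 0"
  using lin_zero flin sub subspace_0 by blast

abbreviation G where "G S s \<equiv> (\<lambda>(t,y). f t s y) ` {p\<in>S. fst p \<le> s}"

lemma gen_eq: "gen scale f S s = span (G S s)" unfolding gen_def by simp

lemma G_sub: "adm V S \<Longrightarrow> G S s \<subseteq> V s"
proof
  fix w assume a: "adm V S" and "w \<in> G S s"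
  then obtain t y where ty: "(t,y) \<in> S" "t \<le> s" "w = f t s y" by auto
  have "0 \<le> t" "y \<in> V t" using a ty unfolding adm_def by auto
  thus "w \<in> V s" using fmap ty by blast
qed

lemma gen_sub: "adm V S \<Longrightarrow> 0 \<le> s \<Longrightarrow> gen scale f S s \<subseteq> V s"
  unfolding gen_eq by (rule span_minimal[OF G_sub sub])

lemma gen_map:
  assumes a: "adm V S" and rs: "0 \<le> r" "r \<le> s"
  shows "f r s ` gen scale f S r \<subseteq> gen scale f S s"
proof
  fix z assume "z \<in> f r s ` gen scale f S r"
  then obtain x where x: "x \<in> span (G S r)" "z = f r s x" unfolding gen_eq by auto
  have "f r s x \<in> span (f r s ` G S r)"
    using lin_span[OF flin[OF rs] sub[OF rs(1)] G_sub[OF a] x(1)] by blast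
  moreover have "f r s ` G S r \<subseteq> G S s"
  proof
    fix w assume "w \<in> f r s ` G S r"
    then obtain t y where ty: "(t,y) \<in> S" "t \<le> r" "w = f r s (f t r y)" by auto
    have "0 \<le> t" "y \<in> V t" using a ty unfolding adm_def by auto
    hence "w = f t s y" using ty fcomp rs by simp
    thus "w \<in> G S s" using ty rs by force
  qed
  ultimately show "z \<in> gen scale f S s" using x span_mono unfolding gen_eq by blast
qed

lemma gen_sub_pmod: "adm V S \<Longrightarrow> sub_pmod scale (gen scale f S) V f"
  unfolding sub_pmod_def using gen_sub gen_map by (simp add: gen_eq)

lemma gen_fin: "finite S \<Longrightarrow> fin_dim scale (gen scale f S s)"
  unfolding fin_dim_def gen_eq
  apply (intro exI[of _ "G S s"] conjI)
  apply simp
  apply (rule span_superset)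
  apply (rule refl)
  done

lemma gen_insert_lt: "s < t \<Longrightarrow> gen scale f (insert (t,y) S) s = gen scale f S s"
  unfolding gen_eq by (rule arg_cong[where f=span]) auto

lemma gen_insert_ge: "t \<le> s \<Longrightarrow> gen scale f (insert (t,y) S) s = {x. \<exists>c. x - scale c (f t s y) \<in> gen scale f S s}"
proof -
  assume "t \<le> s"
  hence "G (insert (t,y) S) s = insert (f t s y) (G S s)" by auto
  thus ?thesis unfolding gen_eq using span_insert by simp
qed


lemma gen_of_compact:
  assumes c: "compact_pmod scale V f"
  shows "\<exists>S. finite S \<and> adm V S \<and> (\<forall>s\<ge>0. V s = gen scale f S s)"
proof -
  obtain T where T: "finite T" "\<And>r s. 0 \<le> r \<Longrightarrow> r \<le> s \<Longrightarrow> T \<inter> {r<..s} = {} \<Longrightarrow> bij_betw (f r s) (V r) (V s)"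
    using c unfolding compact_pmod_def tame_def by blast
  have fd: "\<And>r. 0 \<le> r \<Longrightarrow> fin_dim scale (V r)" using c unfolding compact_pmod_def by blast
  define P where "P = insert 0 {x\<in>T. 0 \<le> x}"
  have finP: "finite P" using T(1) unfolding P_def by simp
  have P0: "\<And>p. p \<in> P \<Longrightarrow> 0 \<le> p" unfolding P_def by auto
  have "\<forall>p\<in>P. \<exists>B. finite B \<and> B \<subseteq> V p \<and> span B = V p"
    using fd P0 unfolding fin_dim_def by blast
  then obtain B where B: "\<And>p. p \<in> P \<Longrightarrow> finite (B p) \<and> B p \<subseteq> V p \<and> span (B p) = V p"
    by metis
  define S where "S = Sigma P B"
  have finS: "finite S" unfolding S_def using finP B by auto
  have admS: "adm V S" unfolding adm_def S_def using B P0 by auto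
  have "V s = gen scale f S s" if s: "0 \<le> s" for s
  proof
    show "gen scale f S s \<subseteq> V s" using gen_sub[OF admS s] .
    define p where "p = Max {q\<in>P. q \<le> s}"
    have ne: "{q\<in>P. q \<le> s} \<noteq> {}" using s unfolding P_def by auto
    have pin: "p \<in> {q\<in>P. q \<le> s}" unfolding p_def using Max_in[OF _ ne] finP by auto
    have pmax: "\<And>q. q \<in> P \<Longrightarrow> q \<le> s \<Longrightarrow> q \<le> p" unfolding p_def using finP by auto
    have p0: "0 \<le> p" using pin P0 by auto
    have gapT: "T \<inter> {p<..s} = {}"
    proof (rule ccontr)
      assume "T \<inter> {p<..s} \<noteq> {}"
      then obtain x where x: "x \<in> T" "p < x" "x \<le> s" by auto
      hence "x \<in> P" using p0 unfolding P_def by auto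
      thus False using pmax x by force
    qed
    have bij: "bij_betw (f p s) (V p) (V s)" using T(2)[OF p0 _ gapT] pin by auto
    show "V s \<subseteq> gen scale f S s"
    proof
      fix v assume "v \<in> V s"
      then obtain w where w: "w \<in> V p" "v = f p s w" using bij unfolding bij_betw_def by auto
      have Bp: "finite (B p)" "B p \<subseteq> V p" "span (B p) = V p" using B pin by auto
      have "f p s w \<in> span (f p s ` B p)"
        using lin_span[OF flin[OF p0] sub[OF p0] Bp(2)] w(1) Bp(3) pin by auto
      moreover have "f p s ` B p \<subseteq> G S s" unfolding S_def using pin by force
      ultimately show "v \<in> gen scale f S s" unfolding gen_eq using w span_mono by blast
    qed
  qed
  thus ?thesis using finS admS by blast
qed

end

locale lcp = pmc +
  assumes lc: "loc_compact_pmod scale V f"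
begin

lemma rc:
  assumes e: "0 \<le> e" and z: "z \<in> V e" and s0: "e < s0"
    and van: "\<And>s. e < s \<Longrightarrow> s \<le> s0 \<Longrightarrow> f e s z = 0"
  shows "z = 0"
proof -
  obtain W where W: "sub_pmod scale W V f" "compact_pmod scale W f" "z \<in> W e"
    using lc e z unfolding loc_compact_pmod_def by blast
  obtain T where T: "finite T" "\<And>r s. 0 \<le> r \<and> r \<le> s \<and> T \<inter> {r<..s} = {} \<Longrightarrow> bij_betw (f r s) (W r) (W s)"
    using W(2) unfolding compact_pmod_def tame_def by blast
  obtain s1 where s1: "e < s1" "s1 \<le> s0" "T \<inter> {e<..s1} = {}" using gap[OF T(1) s0] by blast
  have inj: "inj_on (f e s1) (W e)" using T(2)[of e s1] s1 e unfolding bij_betw_def by auto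
  have "0 \<in> W e" using W(1) e unfolding sub_pmod_def using subspace_0 by blast
  moreover have "f e s1 z = f e s1 0" using van s1 fzero e by simp
  ultimately show "z = 0" using inj W(3) unfolding inj_on_def by blast
qed


lemma gen_tame: "finite S \<Longrightarrow> adm V S \<Longrightarrow> tame (gen scale f S) f"
proof (induction S rule: finite_induct)
  case empty
  have "gen scale f {} s = {0}" for s unfolding gen_eq by simp
  then show ?case unfolding tame_def
    by (intro exI[of _ "{}"]) (auto simp: bij_betw_def fzero)
next
  case (insert p S)
  obtain t y where p: "p = (t,y)" by fastforce
  have admS: "adm V S" using insert.prems unfolding adm_def by auto
  have t0: "0 \<le> t" and yV: "y \<in> V t" using insert.prems p unfolding adm_def by auto
  obtain T' where T': "finite T'" "\<And>r s. 0 \<le> r \<and> r \<le> s \<and> T' \<inter> {r<..s} = {} \<Longrightarrow> bij_betw (f r s) (gen scale f S r) (gen scale f S s)"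
    using insert.IH[OF admS] unfolding tame_def by blast
  define g where "g = gen scale f S"
  define M where "M = {s. t \<le> s \<and> f t s y \<in> g s}"
  define e where "e = Inf M"
  have bddM: "bdd_below M" unfolding M_def by (auto intro: bdd_belowI)
  have Mup: "m' \<in> M" if m: "m \<in> M" "m \<le> m'" for m m'
  proof -
    have "t \<le> m" "f t m y \<in> g m" using m unfolding M_def by auto
    hence "f m m' (f t m y) \<in> g m'" using gen_map[OF admS, of m m'] t0 m unfolding g_def by auto
    moreover have "f m m' (f t m y) = f t m' y" using fcomp t0 yV \<open>t \<le> m\<close> m by blast
    ultimately show ?thesis using \<open>t \<le> m\<close> m unfolding M_def by auto
  qed
  have eM: "e \<in> M" if ne: "M \<noteq> {}"
  proof -
    have et: "t \<le> e" unfolding e_def using ne by (intro cInf_greatest) (auto simp: M_def)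
    have e0: "0 \<le> e" using et t0 by simp
    have above: "s \<in> M" if "e < s" for s
    proof -
      obtain m where "m \<in> M" "m < s" using cInf_lessD[OF ne] \<open>e < s\<close> unfolding e_def by blast
      thus ?thesis using Mup by auto
    qed
    obtain s0 where s0: "e < s0" "T' \<inter> {e<..s0} = {}" using gap[OF T'(1), of e "e+1"] by auto
    have bij0: "bij_betw (f e s0) (g e) (g s0)" using T'(2)[of e s0] s0 e0 unfolding g_def by auto
    have "f t s0 y \<in> g s0" using above[OF s0(1)] unfolding M_def by auto
    then obtain u where u: "u \<in> g e" "f e s0 u = f t s0 y" using bij0 unfolding bij_betw_def by (metis imageE)
    have gV: "\<And>s. 0 \<le> s \<Longrightarrow> g s \<subseteq> V s" unfolding g_def using gen_sub[OF admS] by blast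
    have fte: "f t e y \<in> V e" using fmap t0 et yV by blast
    have uV: "u \<in> V e" using u gV e0 by blast
    define z where "z = f t e y - u"
    have zV: "z \<in> V e" unfolding z_def using subspace_diff[OF sub[OF e0] fte uV] .
    have "z = 0"
    proof (rule rc[OF e0 zV s0(1)])
      fix s assume s: "e < s" "s \<le> s0"
      have bij: "bij_betw (f e s) (g e) (g s)" proof -
        have "T' \<inter> {e<..s} = {}" using s s0 by auto
        thus ?thesis using T'(2)[of e s] s e0 unfolding g_def by auto
      qed
      have "f t s y \<in> g s" using above[OF s(1)] unfolding M_def by auto
      then obtain u1 where u1: "u1 \<in> g e" "f e s u1 = f t s y" using bij unfolding bij_betw_def by (metis imageE)
      have u1V: "u1 \<in> V e" using u1 gV e0 by blast
      have "f e s0 u1 = f s s0 (f e s u1)" using fcomp e0 s u1V by simp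
      also have "\<dots> = f s s0 (f t s y)" using u1 by simp
      also have "\<dots> = f t s0 y" using fcomp t0 et s yV by simp
      finally have "f e s0 u1 = f e s0 u" using u by simp
      hence "u1 = u" using bij0 u u1 unfolding bij_betw_def inj_on_def by blast
      have "f e s z = f e s (f t e y) - f e s u"
        unfolding z_def using lin_diff[OF flin[OF e0] sub[OF e0] fte uV] s by simp
      also have "f e s (f t e y) = f t s y" using fcomp t0 et s yV by simp
      finally show "f e s z = 0" using u1 \<open>u1 = u\<close> by simp
    qed
    hence "f t e y \<in> g e" using u unfolding z_def by simp
    thus ?thesis using et unfolding M_def by simp
  qed
  show ?case unfolding tame_def
  proof (intro exI[of _ "insert t (insert e T')"] conjI allI impI)
    show "finite (insert t (insert e T'))" using T'(1) by simp
    fix r s assume rs: "0 \<le> r \<and> r \<le> s \<and> insert t (insert e T') \<inter> {r<..s} = {}"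
    hence r0: "0 \<le> r" and rs': "r \<le> s" and gT: "T' \<inter> {r<..s} = {}" and tn: "t \<notin> {r<..s}" and en: "e \<notin> {r<..s}" by auto
    have bS: "bij_betw (f r s) (g r) (g s)" using T'(2)[of r s] r0 rs' gT unfolding g_def by auto
    show "bij_betw (f r s) (gen scale f (insert p S) r) (gen scale f (insert p S) s)"
    proof (cases "s < t")
      case True
      thus ?thesis using bS rs' gen_insert_lt[of r t y S] gen_insert_lt[of s t y S] unfolding p g_def by simp
    next
      case False
      hence tr: "t \<le> r" using tn by auto
      hence ts: "t \<le> s" using rs' by simp
      have g'r: "gen scale f (insert p S) r = {x. \<exists>c. x - scale c (f t r y) \<in> g r}"
        unfolding p g_def using gen_insert_ge[OF tr] .
      have g's: "gen scale f (insert p S) s = {x. \<exists>c. x - scale c (f t s y) \<in> g s}"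
        unfolding p g_def using gen_insert_ge[OF ts] .
      have admS': "adm V (insert p S)" using insert.prems .
      have g'V: "gen scale f (insert p S) r \<subseteq> V r" using gen_sub[OF admS' r0] .
      have gV: "g r \<subseteq> V r" unfolding g_def using gen_sub[OF admS r0] .
      have ftr: "f t r y \<in> V r" using fmap t0 tr yV by blast
      have lin: "lin_on scale (V r) (f r s)" using flin r0 rs' by blast
      have frt: "f r s (f t r y) = f t s y" using fcomp t0 tr rs' yV by blast
      have kern: "z = 0" if z: "z \<in> gen scale f (insert p S) r" "f r s z = 0" for z
      proof -
        obtain c where c: "z - scale c (f t r y) \<in> g r" using z g'r by auto
        define u where "u = z - scale c (f t r y)"
        have uV: "u \<in> V r" using c gV unfolding u_def by blast
        have zeq: "z = u + scale c (f t r y)" unfolding u_def by simp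
        have fz: "f r s z = f r s u + scale c (f t s y)"
          unfolding zeq using lin_add[OF lin uV] lin_scale[OF lin ftr] subspace_scale[OF sub[OF r0] ftr] frt by simp
        have injS: "inj_on (f r s) (g r)" using bS unfolding bij_betw_def by blast
        have zero_g: "0 \<in> g r" unfolding g_def gen_eq by (rule span_zero)
        have "z \<in> g r"
        proof (cases "c = 0")
          case True thus ?thesis using c by simp
        next
          case False
          have "f r s u \<in> g s" using gen_map[OF admS r0 rs'] c unfolding u_def g_def by blast
          hence "scale (- 1 / c) (f r s u) \<in> g s" unfolding g_def gen_eq by (rule span_scale)
          moreover have "scale (- 1 / c) (f r s u) = f t s y"
          proof -
            have "f r s u = - scale c (f t s y)" using fz z(2) by (simp add: eq_neg_iff_add_eq_0)
            thus ?thesis using False by simp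
          qed
          ultimately have "s \<in> M" using ts unfolding M_def by simp
          hence Mne: "M \<noteq> {}" by auto
          have "e \<le> s" unfolding e_def using cInf_lower[OF \<open>s \<in> M\<close> bddM] .
          hence "e \<le> r" using en by auto
          hence "r \<in> M" using Mup eM[OF Mne] by blast
          hence "f t r y \<in> g r" unfolding M_def by simp
          thus "z \<in> g r" using c unfolding g_def gen_eq
            by (metis diff_add_cancel span_add span_scale)
        qed
        thus "z = 0" using injS zero_g z(2) fzero r0 rs' unfolding inj_on_def by metis
      qed
      show ?thesis unfolding bij_betw_def
      proof (intro conjI)
        show "inj_on (f r s) (gen scale f (insert p S) r)"
        proof (rule inj_onI)
          fix x1 x2 assume x: "x1 \<in> gen scale f (insert p S) r" "x2 \<in> gen scale f (insert p S) r" "f r s x1 = f r s x2"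
          have "x1 - x2 \<in> gen scale f (insert p S) r" using x(1,2) unfolding gen_eq by (rule span_diff)
          moreover have "f r s (x1 - x2) = 0" proof -
            have "x1 \<in> V r" "x2 \<in> V r" using x g'V by auto
            thus ?thesis using lin_diff[OF lin sub[OF r0]] x(3) by simp
          qed
          ultimately have "x1 - x2 = 0" using kern by blast
          thus "x1 = x2" by simp
        qed
        show "f r s ` gen scale f (insert p S) r = gen scale f (insert p S) s"
        proof
          show "f r s ` gen scale f (insert p S) r \<subseteq> gen scale f (insert p S) s"
            using gen_map[OF admS' r0 rs'] .
          show "gen scale f (insert p S) s \<subseteq> f r s ` gen scale f (insert p S) r"
          proof
            fix v assume "v \<in> gen scale f (insert p S) s"
            then obtain c where c: "v - scale c (f t s y) \<in> g s" using g's by auto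
            then obtain u0 where u0: "u0 \<in> g r" "f r s u0 = v - scale c (f t s y)"
              using bS unfolding bij_betw_def by force
            have u0V: "u0 \<in> V r" using u0 gV by blast
            have "u0 + scale c (f t r y) \<in> gen scale f (insert p S) r" using g'r u0 by (auto intro!: exI[of _ c])
            moreover have "f r s (u0 + scale c (f t r y)) = v"
              using lin_add[OF lin u0V subspace_scale[OF sub[OF r0] ftr]] lin_scale[OF lin ftr] frt u0 by simp
            ultimately show "v \<in> f r s ` gen scale f (insert p S) r" by force
          qed
        qed
      qed
    qed
  qed
qed

lemma gen_compact: "finite S \<Longrightarrow> adm V S \<Longrightarrow> compact_pmod scale (gen scale f S) f"
  unfolding compact_pmod_def using sub_pmod_pmod[OF pm gen_sub_pmod] gen_tame gen_fin by blast

end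


theorem mainTheorem18:
  fixes scale :: "rat \<Rightarrow> 'v::ab_group_add \<Rightarrow> 'v"
    and C :: "nat \<Rightarrow> real \<Rightarrow> 'v set"
    and F :: "nat \<Rightarrow> real \<Rightarrow> real \<Rightarrow> 'v \<Rightarrow> 'v"
    and D :: "nat \<Rightarrow> real \<Rightarrow> 'v \<Rightarrow> 'v"
  assumes "pcomplex scale C F D"
  shows "loc_compact_pcomplex scale C F D \<longleftrightarrow> (\<forall>k. loc_compact_pmod scale (C k) (F k))"
proof -
  have pmC: "\<And>j. pmod scale (C j) (F j)" using assms unfolding pcomplex_def by simp
  have vs: "vector_space scale" using pmC[of 0] unfolding pmod_def by simp
  interpret rvs scale using vs by (simp add: rvs_def)
  have pmcC: "\<And>j. pmc scale (C j) (F j)" using pmC vs by (simp add: pmc_def pmc_axioms_def rvs_def)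
  have Dmap: "\<And>j r x. 0 \<le> r \<Longrightarrow> x \<in> C j r \<Longrightarrow> D j r x \<in> C (Suc j) r"
    using assms unfolding pcomplex_def by blast
  have Dlin: "\<And>j r. 0 \<le> r \<Longrightarrow> lin_on scale (C j r) (D j r)"
    using assms unfolding pcomplex_def by blast
  have DD: "\<And>j r x. 0 \<le> r \<Longrightarrow> x \<in> C j r \<Longrightarrow> D (Suc j) r (D j r x) = 0"
    using assms unfolding pcomplex_def by blast
  have Dcom: "\<And>j r s x. 0 \<le> r \<Longrightarrow> r \<le> s \<Longrightarrow> x \<in> C j r \<Longrightarrow> F (Suc j) r s (D j r x) = D j s (F j r s x)"
    using assms unfolding pcomplex_def by blast
  have Csub: "\<And>j r. 0 \<le> r \<Longrightarrow> subspace (C j r)" using pmc.sub[OF pmcC] .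
  show ?thesis
  proof
    assume L: "loc_compact_pcomplex scale C F D"
    show "\<forall>k. loc_compact_pmod scale (C k) (F k)" unfolding loc_compact_pmod_def
    proof (intro allI impI ballI)
      fix k r x assume r: "0 \<le> r" "x \<in> C k r"
      obtain Y where Y: "sub_pcomplex scale Y C F D" "compact_pcomplex scale Y F D" "x \<in> Y k r"
        using L r unfolding loc_compact_pcomplex_def by blast
      have "sub_pmod scale (Y k) (C k) (F k)" using Y(1) unfolding sub_pcomplex_def by blast
      moreover have "compact_pmod scale (Y k) (F k)"
      proof -
        have cp: "pcomplex scale Y F D" "\<exists>T. finite T \<and> (\<forall>k r s. 0 \<le> r \<and> r \<le> s \<and> T \<inter> {r<..s} = {} \<longrightarrow> bij_betw (F k r s) (Y k r) (Y k s))"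
          "\<forall>k. \<forall>r\<ge>0. fin_dim scale (Y k r)"
          using Y(2) unfolding compact_pcomplex_def by simp_all
        have "pmod scale (Y k) (F k)" using cp(1) unfolding pcomplex_def by simp
        moreover have "tame (Y k) (F k)"
        proof -
          obtain T where T: "finite T" "\<forall>k r s. 0 \<le> r \<and> r \<le> s \<and> T \<inter> {r<..s} = {} \<longrightarrow> bij_betw (F k r s) (Y k r) (Y k s)"
            using cp(2) by blast
          show ?thesis unfolding tame_def using T by (intro exI[of _ T]) simp
        qed
        moreover have "\<forall>r\<ge>0. fin_dim scale (Y k r)" using cp(3) by simp
        ultimately show ?thesis unfolding compact_pmod_def by blast
      qed
      ultimately show "\<exists>W. sub_pmod scale W (C k) (F k) \<and> compact_pmod scale W (F k) \<and> x \<in> W r"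
        using Y(3) by blast
    qed
  next
    assume R: "\<forall>k. loc_compact_pmod scale (C k) (F k)"
    show "loc_compact_pcomplex scale C F D" unfolding loc_compact_pcomplex_def
    proof (intro allI impI ballI)
      fix k r x assume r: "0 \<le> r" "x \<in> C k r"
      obtain W where W: "sub_pmod scale W (C k) (F k)" "compact_pmod scale W (F k)" "x \<in> W r"
        using R r unfolding loc_compact_pmod_def by blast
      have WC: "\<And>s. 0 \<le> s \<Longrightarrow> W s \<subseteq> C k s" using W(1) unfolding sub_pmod_def by blast
      have pmcW: "pmc scale W (F k)" using W(2) vs unfolding compact_pmod_def by (simp add: pmc_def pmc_axioms_def rvs_def)
      obtain S where S: "finite S" "adm W S" "\<And>s. 0 \<le> s \<Longrightarrow> W s = gen scale (F k) S s"
        using pmc.gen_of_compact[OF pmcW W(2)] by blast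
      define S' where "S' = (\<lambda>(t,y). (t, D k t y)) ` S"
      have admS': "adm (C (Suc k)) S'"
        unfolding adm_def S'_def using S(2) WC Dmap unfolding adm_def by fastforce
      have finS': "finite S'" unfolding S'_def using S(1) by simp
      have lcp1: "lcp scale (C (Suc k)) (F (Suc k))"
        using pmcC R by (simp add: lcp_def lcp_axioms_def)
      define Z where "Z = gen scale (F (Suc k)) S'"
      have Zsub: "sub_pmod scale Z (C (Suc k)) (F (Suc k))"
        unfolding Z_def using pmc.gen_sub_pmod[OF pmcC admS'] .
      have Zc: "compact_pmod scale Z (F (Suc k))"
        unfolding Z_def using lcp.gen_compact[OF lcp1 finS' admS'] .
      have ZC: "\<And>s. 0 \<le> s \<Longrightarrow> Z s \<subseteq> C (Suc k) s" using Zsub unfolding sub_pmod_def by blast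
      have DW: "D k s ` W s \<subseteq> Z s" if s: "0 \<le> s" for s
      proof
        fix v assume "v \<in> D k s ` W s"
        then obtain w where w: "w \<in> W s" "v = D k s w" by auto
        define X where "X = (\<lambda>(t,y). F k t s y) ` {p\<in>S. fst p \<le> s}"
        have wX: "w \<in> span X" using w S(3)[OF s] unfolding X_def gen_def by simp
        have XC: "X \<subseteq> C k s"
        proof
          fix q assume "q \<in> X"
          then obtain t y where ty: "(t,y) \<in> S" "t \<le> s" "q = F k t s y" unfolding X_def by auto
          have "0 \<le> t" "y \<in> W t" using S(2) ty unfolding adm_def by auto
          thus "q \<in> C k s" using pmc.fmap[OF pmcC] WC ty by blast
        qed
        have "v \<in> span (D k s ` X)" using lin_span[OF Dlin[OF s] Csub[OF s] XC wX] w by simp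
        moreover have "D k s ` X \<subseteq> (\<lambda>(t,y). F (Suc k) t s y) ` {p\<in>S'. fst p \<le> s}"
        proof
          fix q assume "q \<in> D k s ` X"
          then obtain t y where ty: "(t,y) \<in> S" "t \<le> s" "q = D k s (F k t s y)" unfolding X_def by auto
          have "0 \<le> t" "y \<in> W t" using S(2) ty unfolding adm_def by auto
          hence "y \<in> C k t" using WC by blast
          hence "q = F (Suc k) t s (D k t y)" using Dcom[of t s y k] ty \<open>0 \<le> t\<close> by simp
          moreover have "(t, D k t y) \<in> {p\<in>S'. fst p \<le> s}" using ty unfolding S'_def by force
          ultimately show "q \<in> (\<lambda>(t,y). F (Suc k) t s y) ` {p\<in>S'. fst p \<le> s}" by force
        qed
        ultimately show "v \<in> Z s" unfolding Z_def gen_def using span_mono by blast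
      qed
      have DZ: "D (Suc k) s ` Z s \<subseteq> {0}" if s: "0 \<le> s" for s
      proof
        fix v assume "v \<in> D (Suc k) s ` Z s"
        then obtain z where z: "z \<in> Z s" "v = D (Suc k) s z" by auto
        define X where "X = (\<lambda>(t,y). F (Suc k) t s y) ` {p\<in>S'. fst p \<le> s}"
        have zX: "z \<in> span X" using z unfolding X_def Z_def gen_def by simp
        have XC: "X \<subseteq> C (Suc k) s" unfolding X_def using pmc.G_sub[OF pmcC admS'] by blast
        have "v \<in> span (D (Suc k) s ` X)" using lin_span[OF Dlin[OF s] Csub[OF s] XC zX] z by simp
        moreover have "D (Suc k) s ` X \<subseteq> {0}"
        proof
          fix q assume "q \<in> D (Suc k) s ` X"
          then obtain t y where ty: "(t,y) \<in> S" "t \<le> s" "q = D (Suc k) s (F (Suc k) t s (D k t y))"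
            unfolding X_def S'_def by auto
          have "0 \<le> t" "y \<in> W t" using S(2) ty unfolding adm_def by auto
          hence yC: "y \<in> C k t" using WC by blast
          hence "q = D (Suc k) s (D k s (F k t s y))" using Dcom[of t s y k] ty \<open>0 \<le> t\<close> by simp
          moreover have "F k t s y \<in> C k s" using pmc.fmap[OF pmcC] yC ty \<open>0 \<le> t\<close> by blast
          ultimately show "q \<in> {0}" using DD s by simp
        qed
        ultimately have "v \<in> span {0}" using span_mono by blast
        thus "v \<in> {0}" by simp
      qed
      define Y where "Y = (\<lambda>j. if j = k then W else if j = Suc k then Z else (\<lambda>_. {0}))"
      have Y0: "0 \<in> Y j s" if "0 \<le> s" for j s
        using W(1) Zsub that unfolding Y_def sub_pmod_def using subspace_0 by auto
      have YC: "Y j s \<subseteq> C j s" if "0 \<le> s" for j s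
        using WC ZC that Csub[THEN subspace_0] unfolding Y_def by auto
      have subY_j: "sub_pmod scale (Y j) (C j) (F j)" for j
      proof (cases "j = k \<or> j = Suc k")
        case True thus ?thesis using W(1) Zsub unfolding Y_def by auto
      next
        case False
        hence "Y j = (\<lambda>_. {0})" unfolding Y_def by auto
        thus ?thesis unfolding sub_pmod_def using Csub[THEN subspace_0] pmc.fzero[OF pmcC] by auto
      qed
      have DY: "D j s ` Y j s \<subseteq> Y (Suc j) s" if s: "0 \<le> s" for j s
      proof -
        consider "j = k" | "j = Suc k" | "j \<noteq> k" "j \<noteq> Suc k" by blast
        thus ?thesis
        proof cases
          case 1 thus ?thesis using DW[OF s] unfolding Y_def by simp
        next
          case 2 thus ?thesis using DZ[OF s] unfolding Y_def by simp
        next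
          case 3
          have "D j s 0 = 0" using lin_zero[OF Dlin[OF s] subspace_0[OF Csub[OF s]]] .
          thus ?thesis using 3 Y0[OF s] unfolding Y_def by simp
        qed
      qed
      have subY: "sub_pcomplex scale Y C F D" unfolding sub_pcomplex_def using subY_j DY by blast
      have pcY: "pcomplex scale Y F D" unfolding pcomplex_def
      proof (intro conjI allI impI ballI)
        show "pmod scale (Y j) (F j)" for j using sub_pmod_pmod[OF pmC subY_j] .
        show "D j r ` Y j r \<subseteq> Y (Suc j) r" if "0 \<le> r" for j r using DY[OF that] .
        show "lin_on scale (Y j r) (D j r)" if "0 \<le> r" for j r using lin_on_subset[OF Dlin[OF that] YC[OF that]] .
        show "D (Suc j) r (D j r x) = 0" if "0 \<le> r" "x \<in> Y j r" for j r x using DD YC that by blast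
        show "F (Suc j) r s (D j r x) = D j s (F j r s x)" if "0 \<le> r \<and> r \<le> s" "x \<in> Y j r" for j r s x
          using Dcom YC that by blast
      qed
      obtain TW where TW: "finite TW" "\<And>r s. 0 \<le> r \<and> r \<le> s \<and> TW \<inter> {r<..s} = {} \<Longrightarrow> bij_betw (F k r s) (W r) (W s)"
        using W(2) unfolding compact_pmod_def tame_def by blast
      obtain TZ where TZ: "finite TZ" "\<And>r s. 0 \<le> r \<and> r \<le> s \<and> TZ \<inter> {r<..s} = {} \<Longrightarrow> bij_betw (F (Suc k) r s) (Z r) (Z s)"
        using Zc unfolding compact_pmod_def tame_def by blast
      have tameY: "\<exists>T. finite T \<and> (\<forall>j r s. 0 \<le> r \<and> r \<le> s \<and> T \<inter> {r<..s} = {} \<longrightarrow> bij_betw (F j r s) (Y j r) (Y j s))"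
      proof (intro exI[of _ "TW \<union> TZ"] conjI allI impI)
        show "finite (TW \<union> TZ)" using TW TZ by simp
        fix j r s assume a: "0 \<le> r \<and> r \<le> s \<and> (TW \<union> TZ) \<inter> {r<..s} = {}"
        consider "j = k" | "j = Suc k" | "j \<noteq> k" "j \<noteq> Suc k" by blast
        thus "bij_betw (F j r s) (Y j r) (Y j s)"
        proof cases
          case 1 thus ?thesis using TW(2)[of r s] a unfolding Y_def by auto
        next
          case 2 thus ?thesis using TZ(2)[of r s] a unfolding Y_def by auto
        next
          case 3
          have "F j r s 0 = 0" using pmc.fzero[OF pmcC] a by blast
          thus ?thesis using 3 unfolding Y_def bij_betw_def by simp
        qed
      qed
      have bndY: "\<exists>N. \<forall>j\<ge>N. \<forall>r\<ge>0. Y j r = {0}"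
        by (intro exI[of _ "Suc (Suc k)"]) (simp add: Y_def)
      have fdY: "\<forall>j. \<forall>r\<ge>0. fin_dim scale (Y j r)"
      proof (intro allI impI)
        fix j and r :: real assume "0 \<le> r"
        have "fin_dim scale (W r)" using W(2) \<open>0 \<le> r\<close> unfolding compact_pmod_def by blast
        moreover have "fin_dim scale (Z r)" using Zc \<open>0 \<le> r\<close> unfolding compact_pmod_def by blast
        moreover have "fin_dim scale {0}" unfolding fin_dim_def by (intro exI[of _ "{}"]) simp
        ultimately show "fin_dim scale (Y j r)" unfolding Y_def by simp
      qed
      have "compact_pcomplex scale Y F D"
        unfolding compact_pcomplex_def using pcY tameY bndY fdY by blast
      moreover have "x \<in> Y k r" using W(3) unfolding Y_def by simp
      ultimately show "\<exists>Y. sub_pcomplex scale Y C F D \<and> compact_pcomplex scale Y F D \<and> x \<in> Y k r"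
        using subY by blast
    qed
  qed
qed

end
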